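(* Let $K$ be a field of characteristic $p>0$. Let $W_1,W_2$ be subfields of $K$ such that $(K,W_1,W_2)$ is a $2$-foliation on $K$, and let $W_3$ be a subfield of $W_2$ such that $(W_1,W_2,W_3)$ is a $2$-foliation on $W_1$. Then $(K,W_1,W_2,W_3)$ is a $3$-foliation on $K$.
   Context: For a field $F$ of characteristic $p$, a power tower on $F$ is a sequence of subfields $V_0,V_1,\ldots$ of $F$ with $V_j=V_i\cdot F^{p^j}$ whenever $j\le i$ ($\cdot$ = compositum in $F$). For a positive integer $n$, an $n$-foliation on $F$ is a chain of subfields $F=V_0\supseteq V_1\supseteq\cdots\supseteq V_n$ such that the sequence $V_0,V_1,\ldots,V_n,V_n,V_n,\ldots$ is a power tower on $F$ of length exactly $n$ (i.e. $n$ is the least integer with $V_N=V_n$ for all $N\ge n$) and $\dim_{V_{i+1}}(V_i)=\dim_{V_{j+1}}(V_j)$ for all $0\le i,j<n$. *)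

theory Defs
  imports Main "HOL-Library.Equipollence"
begin

text \<open>All fields considered are subfields (given as carrier sets) of an ambient
  field type 'a; the characteristic p is CHAR('a).\<close>

definition is_subfield :: "'a::field set \<Rightarrow> bool" where
  "is_subfield S \<longleftrightarrow> 0 \<in> S \<and> 1 \<in> S \<and>
     (\<forall>x\<in>S. \<forall>y\<in>S. x + y \<in> S \<and> x - y \<in> S \<and> x * y \<in> S) \<and>
     (\<forall>x\<in>S. x \<noteq> 0 \<longrightarrow> inverse x \<in> S)"

definition compositum :: "'a::field set \<Rightarrow> 'a set \<Rightarrow> 'a set" where
  "compositum A B = \<Inter> {S. is_subfield S \<and> A \<union> B \<subseteq> S}"

definition frob_pow :: "'a::field set \<Rightarrow> nat \<Rightarrow> 'a set" where
  "frob_pow F j = (\<lambda>x. x ^ (CHAR('a) ^ j)) ` F"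

definition lin_indep_over :: "'a::field set \<Rightarrow> 'a set \<Rightarrow> bool" where
  "lin_indep_over W B \<longleftrightarrow> (\<forall>S c. finite S \<and> S \<subseteq> B \<and> (\<forall>x\<in>S. c x \<in> W) \<and>
       (\<Sum>x\<in>S. c x * x) = 0 \<longrightarrow> (\<forall>x\<in>S. c x = 0))"

definition span_over :: "'a::field set \<Rightarrow> 'a set \<Rightarrow> 'a set" where
  "span_over W B = {(\<Sum>x\<in>S. c x * x) | S c. finite S \<and> S \<subseteq> B \<and> (\<forall>x\<in>S. c x \<in> W)}"

definition is_basis_over :: "'a::field set \<Rightarrow> 'a set \<Rightarrow> 'a set \<Rightarrow> bool" where
  "is_basis_over W V B \<longleftrightarrow> B \<subseteq> V \<and> lin_indep_over W B \<and> V \<subseteq> span_over W B"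

text \<open>dim_{W1} V1 = dim_{W2} V2 (as cardinals): they have equipollent bases.\<close>
definition same_dim :: "'a::field set \<Rightarrow> 'a set \<Rightarrow> 'a set \<Rightarrow> 'a set \<Rightarrow> bool" where
  "same_dim W1 V1 W2 V2 \<longleftrightarrow>
     (\<exists>B1 B2. is_basis_over W1 V1 B1 \<and> is_basis_over W2 V2 B2 \<and> B1 \<approx> B2)"

definition power_tower :: "'a::field set \<Rightarrow> (nat \<Rightarrow> 'a set) \<Rightarrow> bool" where
  "power_tower F V \<longleftrightarrow> (\<forall>i. is_subfield (V i) \<and> V i \<subseteq> F) \<and>
     (\<forall>i j. j \<le> i \<longrightarrow> V j = compositum (V i) (frob_pow F j))"

definition tower_length :: "(nat \<Rightarrow> 'a set) \<Rightarrow> nat \<Rightarrow> bool" where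
  "tower_length V n \<longleftrightarrow> (\<forall>N\<ge>n. V N = V n) \<and> (\<forall>m<n. \<not> (\<forall>N\<ge>m. V N = V m))"

definition foliation :: "'a::field set \<Rightarrow> nat \<Rightarrow> 'a set list \<Rightarrow> bool" where
  "foliation F n Vs \<longleftrightarrow> 0 < n \<and> length Vs = Suc n \<and> Vs ! 0 = F \<and>
     (\<forall>i<n. Vs ! Suc i \<subseteq> Vs ! i) \<and>
     power_tower F (\<lambda>k. Vs ! min k n) \<and>
     tower_length (\<lambda>k. Vs ! min k n) n \<and>
     (\<forall>i<n. \<forall>j<n. same_dim (Vs ! Suc i) (Vs ! i) (Vs ! Suc j) (Vs ! j))"

end

theory Submission
  imports Defs "HOL-Computational_Algebra.Primes" "HOL-Algebra.Embedded_Algebras"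
begin

lemma frob_add:
  assumes "CHAR('a::field) > 0"
  shows "(x + y :: 'a) ^ CHAR('a) = x ^ CHAR('a) + y ^ CHAR('a)"
proof -
  define p where "p = CHAR('a)"
  have pr: "prime p" using assms prime_CHAR_semidom unfolding p_def by blast
  have p0: "p > 0" using assms p_def by simp
  have z: "of_nat (p choose k) = (0::'a)" if "k \<le> p" "k \<noteq> 0" "k \<noteq> p" for k
    using that dvd_choose_prime[of k p] pr p0
    by (auto simp: of_nat_eq_0_iff_char_dvd p_def[symmetric])
  have "(x + y) ^ p = (\<Sum>k\<le>p. of_nat (p choose k) * x^k * y^(p-k))"
    by (rule binomial_ring)
  also have "\<dots> = (\<Sum>k\<in>{0,p}. of_nat (p choose k) * x^k * y^(p-k))"
    by (rule sum.mono_neutral_right) (auto simp: z)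
  also have "\<dots> = x ^ p + y ^ p" using p0 by simp
  finally show ?thesis unfolding p_def .
qed

lemma frob_diff:
  assumes "CHAR('a::field) > 0"
  shows "(x - y :: 'a) ^ CHAR('a) = x ^ CHAR('a) - y ^ CHAR('a)"
  using frob_add[OF assms, of "x - y" y] by (simp add: algebra_simps)

lemma subfield_pow: "is_subfield S \<Longrightarrow> x \<in> S \<Longrightarrow> x ^ n \<in> S"
  by (induct n) (auto simp: is_subfield_def)

lemma preimage_subfield:
  assumes "CHAR('a::field) > 0" "is_subfield (S::'a set)"
  shows "is_subfield {x. x ^ CHAR('a) \<in> S}"
  using assms(2) unfolding is_subfield_def
  by (auto simp: frob_add[OF assms(1)] frob_diff[OF assms(1)] power_mult_distrib power_inverse
      zero_power[OF assms(1)] )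


lemma span_zero: "0 \<in> span_over W B"
  unfolding span_over_def by (rule CollectI, rule exI[of _ "{}"]) auto

lemma span_base: "is_subfield W \<Longrightarrow> b \<in> B \<Longrightarrow> b \<in> span_over W B"
  unfolding span_over_def is_subfield_def
  by (rule CollectI, rule exI[of _ "{b}"], rule exI[of _ "\<lambda>_. 1"]) auto

lemma span_overI: "finite S \<Longrightarrow> S \<subseteq> B \<Longrightarrow> \<forall>x\<in>S. c x \<in> W \<Longrightarrow> (\<Sum>x\<in>S. c x * x) \<in> span_over W B"
  unfolding span_over_def by blast

lemma span_mono: "B \<subseteq> B' \<Longrightarrow> span_over W B \<subseteq> span_over W B'"
  unfolding span_over_def by blast

lemma span_smult:
  assumes "is_subfield W" "a \<in> W" "x \<in> span_over W B"
  shows "a * x \<in> span_over W B"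
proof -
  obtain S c where x: "x = (\<Sum>y\<in>S. c y * y)" "finite S" "S \<subseteq> B" "\<forall>y\<in>S. c y \<in> W"
    using assms(3) unfolding span_over_def by blast
  have "a * x = (\<Sum>y\<in>S. (a * c y) * y)" unfolding x(1) sum_distrib_left by (simp add: mult.assoc)
  moreover have "\<forall>y\<in>S. a * c y \<in> W" using x(4) assms(1,2) unfolding is_subfield_def by blast
  ultimately show ?thesis using x(2,3) span_overI[of S B "\<lambda>y. a * c y" W] by simp
qed

lemma span_add:
  assumes "is_subfield W" "x \<in> span_over W B" "y \<in> span_over W B"
  shows "x + y \<in> span_over W B"
proof -
  obtain S c where x: "x = (\<Sum>z\<in>S. c z * z)" "finite S" "S \<subseteq> B" "\<forall>z\<in>S. c z \<in> W"
    using assms(2) unfolding span_over_def by blast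
  obtain T d where y: "y = (\<Sum>z\<in>T. d z * z)" "finite T" "T \<subseteq> B" "\<forall>z\<in>T. d z \<in> W"
    using assms(3) unfolding span_over_def by blast
  define e where "e = (\<lambda>z. (if z \<in> S then c z else 0) + (if z \<in> T then d z else 0))"
  have fin: "finite (S \<union> T)" using x(2) y(2) by simp
  have "(\<Sum>z\<in>S \<union> T. e z * z) = (\<Sum>z\<in>S \<union> T. (if z \<in> S then c z * z else 0)) + (\<Sum>z\<in>S \<union> T. (if z \<in> T then d z * z else 0))"
    unfolding sum.distrib[symmetric] by (rule sum.cong) (auto simp: e_def distrib_right)
  also have "\<dots> = x + y"
  proof -
    have i1: "(S \<union> T) \<inter> S = S" "(S \<union> T) \<inter> T = T" by blast+
    show ?thesis unfolding x(1) y(1)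
      using sum.inter_restrict[OF fin, where g="\<lambda>z. c z * z" and B=S]
        sum.inter_restrict[OF fin, where g="\<lambda>z. d z * z" and B=T]
      unfolding i1 by simp
  qed
  finally have "x + y = (\<Sum>z\<in>S \<union> T. e z * z)" by simp
  moreover have "\<forall>z\<in>S \<union> T. e z \<in> W"
    using x(4) y(4) assms(1) unfolding e_def is_subfield_def by auto
  ultimately show ?thesis using fin x(3) y(3) span_overI[of "S \<union> T" B e W] by simp
qed

lemma span_sum:
  assumes "is_subfield W" "finite S" "S \<subseteq> span_over W B" "\<forall>x\<in>S. c x \<in> W"
  shows "(\<Sum>x\<in>S. c x * x) \<in> span_over W B"
  using assms(2-4)
proof (induct S rule: finite_induct)
  case empty thus ?case by (simp add: span_zero)
next
  case (insert a S)
  thus ?case by (simp add: span_add[OF assms(1)] span_smult[OF assms(1)])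
qed

lemma span_span:
  assumes "is_subfield W" "A \<subseteq> span_over W B"
  shows "span_over W A \<subseteq> span_over W B"
proof
  fix x assume "x \<in> span_over W A"
  then obtain S c where x: "x = (\<Sum>z\<in>S. c z * z)" "finite S" "S \<subseteq> A" "\<forall>z\<in>S. c z \<in> W"
    unfolding span_over_def by blast
  show "x \<in> span_over W B" unfolding x(1) using span_sum[OF assms(1) x(2) _ x(4)] x(3) assms(2) by blast
qed

lemma indep_mono: "lin_indep_over W B \<Longrightarrow> B' \<subseteq> B \<Longrightarrow> lin_indep_over W B'"
  unfolding lin_indep_over_def by blast

lemma indep_span_mem:
  assumes "is_subfield W" "lin_indep_over W B" "b \<in> B" "B' \<subseteq> B" "b \<in> span_over W B'"
  shows "b \<in> B'"
proof (rule ccontr)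
  assume nb: "b \<notin> B'"
  obtain S c where x: "b = (\<Sum>z\<in>S. c z * z)" "finite S" "S \<subseteq> B'" "\<forall>z\<in>S. c z \<in> W"
    using assms(5) unfolding span_over_def by blast
  have bS: "b \<notin> S" using nb x(3) by auto
  define c' where "c' = c(b := -1)"
  have "(\<Sum>z\<in>insert b S. c' z * z) = c' b * b + (\<Sum>z\<in>S. c' z * z)"
    by (rule sum.insert[OF x(2) bS])
  also have "(\<Sum>z\<in>S. c' z * z) = (\<Sum>z\<in>S. c z * z)"
    using bS by (intro sum.cong) (auto simp: c'_def)
  finally have s0: "(\<Sum>z\<in>insert b S. c' z * z) = 0" using x(1) by (simp add: c'_def)
  have m1: "-1 \<in> W" using assms(1) unfolding is_subfield_def by (metis diff_0)
  have cW: "\<forall>z\<in>insert b S. c' z \<in> W"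
    using x(4) m1 bS unfolding c'_def by auto
  have sub: "insert b S \<subseteq> B" using x(3) assms(3,4) by auto
  have "c' b = 0"
    using assms(2)[unfolded lin_indep_over_def, rule_format, of "insert b S" c'] s0 cW sub x(2) by simp
  thus False by (simp add: c'_def)
qed


definition FR :: "'a::field ring" where
  "FR = \<lparr>carrier = UNIV, mult = (*), one = 1, zero = 0, add = (+)\<rparr>"

lemma FR_simps [simp]: "carrier FR = UNIV" "mult FR = (*)" "one FR = 1" "zero FR = 0" "add FR = (+)"
  by (simp_all add: FR_def)

lemma FR_cring: "cring (FR :: 'a::field ring)"
  by (unfold FR_def) (auto intro!: cringI abelian_groupI comm_monoidI left_minus distrib_right)

lemma FR_field: "field (FR :: 'a::field ring)"
proof (rule cring.field_intro2[OF FR_cring])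
  show "\<zero>\<^bsub>FR\<^esub> \<noteq> (\<one>\<^bsub>FR\<^esub> :: 'a)" by simp
  fix x :: 'a assume "x \<in> carrier FR - {\<zero>\<^bsub>FR\<^esub>}"
  thus "x \<in> Units FR" unfolding Units_def by (auto intro!: exI[of _ "inverse x"])
qed

lemma FR_ring: "ring (FR :: 'a::field ring)"
  using FR_cring cring.axioms(1) by blast

lemma FR_a_inv: "\<ominus>\<^bsub>FR\<^esub> (x::'a::field) = - x"
  using abelian_group.minus_equality[OF ring.is_abelian_group[OF FR_ring], of "-x" x] by simp

lemma FR_inv: "(x::'a::field) \<noteq> 0 \<Longrightarrow> inv\<^bsub>FR\<^esub> x = inverse x"
  using monoid.inv_char[OF ring.is_monoid[OF FR_ring], of x "inverse x"] by simp

lemma FR_subfield: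
  assumes "is_subfield (W::'a::field set)"
  shows "subfield W FR"
proof (rule field.subfieldI'[OF FR_field])
  have neg: "\<And>h. h \<in> W \<Longrightarrow> -h \<in> W" using assms unfolding is_subfield_def by (metis diff_0)
  show "subring W FR"
    by (rule ring.subringI[OF FR_ring]) (use assms neg in \<open>auto simp: FR_a_inv is_subfield_def\<close>)
  fix k assume "k \<in> W - {\<zero>\<^bsub>FR\<^esub>}"
  thus "inv\<^bsub>FR\<^esub> k \<in> W" using assms by (auto simp: FR_inv is_subfield_def)
qed


lemmas FR_combine_simps = ring.combine.simps[OF FR_ring]

lemma combine_span:
  assumes "is_subfield W"
  shows "set Ks \<subseteq> W \<Longrightarrow> ring.combine FR Ks Us \<in> span_over W (set Us)"
proof (induct Us arbitrary: Ks)
  case Nil thus ?case by (cases Ks) (auto simp: FR_combine_simps span_zero)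
next
  case (Cons u Us)
  show ?case
  proof (cases Ks)
    case Nil thus ?thesis by (simp add: FR_combine_simps span_zero)
  next
    case (Cons k Ks')
    have "k * u \<in> span_over W (set (u # Us))"
      using Cons.prems \<open>Ks = k # Ks'\<close> by (intro span_smult[OF assms] span_base[OF assms]) auto
    moreover have "ring.combine FR Ks' Us \<in> span_over W (set (u # Us))"
      using Cons.hyps[of Ks'] Cons.prems \<open>Ks = k # Ks'\<close> span_mono[of "set Us" "set (u # Us)" W] by auto
    ultimately show ?thesis using \<open>Ks = k # Ks'\<close> by (simp add: FR_combine_simps span_add[OF assms])
  qed
qed

lemma combine_map: "distinct us \<Longrightarrow> ring.combine FR (map f us) us = (\<Sum>u\<in>set us. f u * (u::'a::field))"
  by (induct us) (auto simp: FR_combine_simps)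

lemma Span_eq:
  assumes "is_subfield (W::'a::field set)" "distinct us"
  shows "ring.Span FR W us = span_over W (set us)"
proof
  have SE: "ring.Span FR W us = {ring.combine FR Ks us | Ks. set Ks \<subseteq> W}"
    by (rule ring.Span_eq_combine_set[OF FR_ring FR_subfield[OF assms(1)]]) simp
  show "ring.Span FR W us \<subseteq> span_over W (set us)"
    unfolding SE using combine_span[OF assms(1)] by auto
  show "span_over W (set us) \<subseteq> ring.Span FR W us"
  proof
    fix x assume "x \<in> span_over W (set us)"
    then obtain S c where x: "x = (\<Sum>z\<in>S. c z * z)" "finite S" "S \<subseteq> set us" "\<forall>z\<in>S. c z \<in> W"
      unfolding span_over_def by blast
    define f where "f = (\<lambda>u. if u \<in> S then c u else 0)"
    have "x = (\<Sum>u\<in>set us. f u * u)"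
    proof -
      have i: "set us \<inter> S = S" using x(3) by blast
      show ?thesis unfolding x(1) f_def
        using sum.inter_restrict[OF finite_set[of us], where g="\<lambda>z. c z * z" and B=S] unfolding i
        by (auto intro!: sum.cong)
    qed
    also have "\<dots> = ring.combine FR (map f us) us" using combine_map[OF assms(2)] by simp
    finally have "x = ring.combine FR (map f us) us" .
    moreover have "set (map f us) \<subseteq> W" using x(4) assms(1) unfolding f_def is_subfield_def by auto
    ultimately show "x \<in> ring.Span FR W us" unfolding SE by blast
  qed
qed

lemma indep_list:
  assumes "is_subfield (W::'a::field set)"
  shows "distinct us \<Longrightarrow> lin_indep_over W (set us) \<Longrightarrow> ring.independent FR W us"
proof (induct us)
  case Nil thus ?case by (simp add: ring.li_Nil[OF FR_ring])
next
  case (Cons u us)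
  have "u \<notin> span_over W (set us)"
    using indep_span_mem[OF assms Cons.prems(2), of u "set us"] Cons.prems(1) by auto
  hence "u \<notin> ring.Span FR W us" using Span_eq[OF assms] Cons.prems(1) by simp
  moreover have "ring.independent FR W us"
    using Cons indep_mono[of W "set (u # us)" "set us"] by auto
  ultimately show ?case by (intro ring.li_Cons[OF FR_ring]) auto
qed

lemma exchange:
  assumes "is_subfield (W::'a::field set)" "finite S" "lin_indep_over W S" "finite B" "lin_indep_over W B"
    "S \<subseteq> span_over W B"
  shows "card S \<le> card B"
proof -
  obtain us where us: "set us = S" "distinct us" using finite_distinct_list[OF assms(2)] by blast
  obtain vs where vs: "set vs = B" "distinct vs" using finite_distinct_list[OF assms(4)] by blast
  have "length us \<le> length vs"
    using ring.independent_length_le[OF FR_ring FR_subfield[OF assms(1)]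
        indep_list[OF assms(1) us(2)] indep_list[OF assms(1) vs(2)]]
      us vs assms(3,5,6) Span_eq[OF assms(1) vs(2)] by auto
  thus ?thesis using us vs distinct_card by metis
qed


lemma fin_case:
  assumes "is_subfield (W::'a::field set)" "finite B" "lin_indep_over W B" "lin_indep_over W C"
    "C \<subseteq> span_over W B"
  shows "finite C \<and> card C \<le> card B"
proof -
  have le: "card S \<le> card B" if "finite S" "S \<subseteq> C" for S
    using exchange[OF assms(1) that(1) indep_mono[OF assms(4) that(2)] assms(2,3)] that(2) assms(5) by blast
  have "finite C"
  proof (rule ccontr)
    assume "infinite C"
    then obtain S where "finite S" "card S = Suc (card B)" "S \<subseteq> C"
      using infinite_arbitrarily_large by blast
    thus False using le by fastforce
  qed
  thus ?thesis using le by blast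
qed

lemma times_nat_lepoll: "infinite C \<Longrightarrow> C \<times> (UNIV::nat set) \<lesssim> C"
proof -
  assume inf: "infinite C"
  have "C \<times> (UNIV::nat set) \<lesssim> C \<times> C"
    by (rule times_lepoll_mono) (use inf infinite_le_lepoll in auto)
  moreover have "C \<times> C \<approx> C"
    using eqpoll_iff_card_of_ordIso card_of_Times_same_infinite[OF inf] by blast
  ultimately show ?thesis using lepoll_trans2 by blast
qed

lemma inf_case:
  assumes "is_subfield (W::'a::field set)" "lin_indep_over W B" "C \<subseteq> span_over W B"
    "B \<subseteq> span_over W C" "infinite C"
  shows "B \<lesssim> C"
proof -
  have "\<forall>c\<in>C. \<exists>L. set L \<subseteq> B \<and> c \<in> span_over W (set L)"
  proof
    fix c assume "c \<in> C"
    then obtain S f where x: "c = (\<Sum>z\<in>S. f z * z)" "finite S" "S \<subseteq> B" "\<forall>z\<in>S. f z \<in> W"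
      using assms(3) unfolding span_over_def by blast
    obtain L where "set L = S" using finite_list[OF x(2)] by blast
    thus "\<exists>L. set L \<subseteq> B \<and> c \<in> span_over W (set L)"
      using x span_overI[of S S f W] by auto
  qed
  then obtain L where L: "\<And>c. c \<in> C \<Longrightarrow> set (L c) \<subseteq> B \<and> c \<in> span_over W (set (L c))"
    by metis
  define U where "U = (\<Union>c\<in>C. set (L c))"
  have UB: "U \<subseteq> B" using L unfolding U_def by blast
  have "C \<subseteq> span_over W U"
    using L span_mono[of _ U W] unfolding U_def by blast
  hence "span_over W C \<subseteq> span_over W U" by (rule span_span[OF assms(1)])
  hence "B \<subseteq> span_over W U" using assms(4) by blast
  hence BU: "B \<subseteq> U" using indep_span_mem[OF assms(1,2) _ UB] by blast
  have "U \<subseteq> (\<lambda>(c, n). L c ! n) ` (C \<times> (UNIV::nat set))"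
  proof
    fix x assume "x \<in> U"
    then obtain c where c: "c \<in> C" "x \<in> set (L c)" unfolding U_def by blast
    then obtain n where "x = L c ! n" by (metis in_set_conv_nth)
    thus "x \<in> (\<lambda>(c, n). L c ! n) ` (C \<times> (UNIV::nat set))" using c(1) by force
  qed
  hence "U \<lesssim> C \<times> (UNIV::nat set)" by (rule subset_image_lepoll)
  hence "U \<lesssim> C" using times_nat_lepoll[OF assms(5)] lepoll_trans by blast
  thus ?thesis using BU subset_imp_lepoll lepoll_trans by blast
qed

lemma basis_eqpoll:
  assumes "is_subfield W" "is_basis_over W V B" "is_basis_over W V C"
  shows "B \<approx> C"
proof -
  have B: "B \<subseteq> V" "lin_indep_over W B" "V \<subseteq> span_over W B" using assms(2) unfolding is_basis_over_def by auto
  have C: "C \<subseteq> V" "lin_indep_over W C" "V \<subseteq> span_over W C" using assms(3) unfolding is_basis_over_def by auto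
  show ?thesis
  proof (cases "finite B")
    case True
    have c1: "finite C \<and> card C \<le> card B" using fin_case[OF assms(1) True B(2) C(2)] B C by blast
    have c2: "card B \<le> card C" using fin_case[OF assms(1) _ C(2) B(2)] c1 B C by blast
    show ?thesis using c1 c2 True eqpoll_iff_card by (metis le_antisym)
  next
    case False
    have "infinite C" using fin_case[OF assms(1) _ C(2) B(2)] B C False by blast
    hence "B \<lesssim> C" using inf_case[OF assms(1) B(2)] B C by blast
    moreover have "C \<lesssim> B" using inf_case[OF assms(1) C(2)] B C False by blast
    ultimately show ?thesis by (rule lepoll_antisym)
  qed
qed


lemma subfield_Inter: "\<forall>S\<in>F. is_subfield S \<Longrightarrow> is_subfield (\<Inter>F)"
  unfolding is_subfield_def by blast

lemma comp_subfield: "is_subfield (compositum A B)"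
  unfolding compositum_def by (rule subfield_Inter) auto

lemma comp_upper: "A \<subseteq> compositum A B" "B \<subseteq> compositum A B"
  unfolding compositum_def by auto

lemma comp_least: "is_subfield S \<Longrightarrow> A \<subseteq> S \<Longrightarrow> B \<subseteq> S \<Longrightarrow> compositum A B \<subseteq> S"
  unfolding compositum_def by auto

lemma comp_eq: "is_subfield S \<Longrightarrow> A \<subseteq> S \<Longrightarrow> B \<subseteq> S \<Longrightarrow> S \<subseteq> compositum A B \<Longrightarrow> compositum A B = S"
  using comp_least by blast

lemma frob0: "frob_pow F 0 = F"
  unfolding frob_pow_def by simp

lemma frob1: "frob_pow F 1 = (\<lambda>x. x ^ CHAR('a)) ` (F::'a::field set)"
  unfolding frob_pow_def by simp

lemma frob2_mem: "x \<in> F \<Longrightarrow> ((x::'a::field) ^ CHAR('a)) ^ CHAR('a) \<in> frob_pow F 2"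
  unfolding frob_pow_def by (auto simp: power2_eq_square power_mult)

lemma frob2_memD: "y \<in> frob_pow F 2 \<Longrightarrow> \<exists>x\<in>(F::'a::field set). y = (x ^ CHAR('a)) ^ CHAR('a)"
  unfolding frob_pow_def by (auto simp: power2_eq_square power_mult)

lemma same_dim_trans:
  assumes "is_subfield W2" "same_dim W1 V1 W2 V2" "same_dim W2 V2 W3 V3"
  shows "same_dim W1 V1 W3 V3"
  using assms basis_eqpoll unfolding same_dim_def by (meson eqpoll_trans)

lemma same_dim_sym: "same_dim W1 V1 W2 V2 \<Longrightarrow> same_dim W2 V2 W1 V1"
  unfolding same_dim_def by (meson eqpoll_sym)

lemma same_dim_refl: "same_dim W1 V1 W2 V2 \<Longrightarrow> same_dim W1 V1 W1 V1"
  unfolding same_dim_def by (meson eqpoll_refl)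

theorem mainTheorem13:
  fixes K W1 W2 W3 :: "'a::field set"
  assumes "CHAR('a) > 0"
    and "is_subfield K"
    and "is_subfield W1" and "is_subfield W2" and "is_subfield W3"
    and "W1 \<subseteq> K" and "W2 \<subseteq> K" and "W3 \<subseteq> W2"
    and "foliation K 2 [K, W1, W2]"
    and "foliation W1 2 [W1, W2, W3]"
  shows "foliation K 3 [K, W1, W2, W3]"
proof -
  note ch = assms(1)
  define p where "p = CHAR('a)"
  note f1 = assms(9)[unfolded foliation_def]
  note f2 = assms(10)[unfolded foliation_def]
  have pt1: "\<And>i j. j \<le> i \<Longrightarrow> [K, W1, W2] ! min j 2 = compositum ([K, W1, W2] ! min i 2) (frob_pow K j)"
    using f1 unfolding power_tower_def by blast
  have pt2: "\<And>i j. j \<le> i \<Longrightarrow> [W1, W2, W3] ! min j 2 = compositum ([W1, W2, W3] ! min i 2) (frob_pow W1 j)"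
    using f2 unfolding power_tower_def by blast
  have T1: "W1 = compositum W2 (frob_pow K 1)" using pt1[of 1 2] by (simp add: numeral_2_eq_2)
  have T2: "W2 = compositum W2 (frob_pow K 2)" using pt1[of 2 2] by (simp add: numeral_2_eq_2)
  have U1: "W2 = compositum W3 (frob_pow W1 1)" using pt2[of 1 2] by (simp add: numeral_2_eq_2)
  have U2: "W3 = compositum W3 (frob_pow W1 2)" using pt2[of 2 2] by (simp add: numeral_2_eq_2)
  have "\<forall>i<2. [K,W1,W2] ! Suc i \<subseteq> [K,W1,W2] ! i" using f1 by blast
  from this[rule_format, of 1] have W21: "W2 \<subseteq> W1" by simp
  have W31: "W3 \<subseteq> W1" using W21 assms(8) by auto
  have K1W1: "frob_pow K 1 \<subseteq> W1" using T1 comp_upper by metis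
  have K2W2: "frob_pow K 2 \<subseteq> W2" using T2 comp_upper by metis
  have W12W3: "frob_pow W1 2 \<subseteq> W3" using U2 comp_upper by metis
  have K1W1': "x ^ p \<in> W1" if "x \<in> K" for x using K1W1 that unfolding frob1 p_def by auto
  have W12W3': "(x ^ p) ^ p \<in> W3" if "x \<in> W1" for x using W12W3 frob2_mem[OF that] unfolding p_def by auto
  have K2W2': "(x ^ p) ^ p \<in> W2" if "x \<in> K" for x using K2W2 frob2_mem[OF that] unfolding p_def by auto
  have A: "frob_pow K j \<subseteq> W3" if "j \<ge> 3" for j
  proof
    fix y assume "y \<in> frob_pow K j"
    then obtain x where x: "x \<in> K" "y = x ^ p ^ j" unfolding frob_pow_def p_def by auto
    have x': "x ^ p ^ (j - 3) \<in> K" using subfield_pow[OF assms(2) x(1)] .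
    have "p ^ j = p ^ (j - 3) * p * p * p" using that
      by (metis add.commute le_add_diff_inverse mult.assoc power_add power3_eq_cube)
    hence "y = (((x ^ p ^ (j - 3)) ^ p) ^ p) ^ p" using x(2) by (simp add: power_mult mult.assoc)
    thus "y \<in> W3" using W12W3'[OF K1W1'[OF x']] by simp
  qed
  have W2p: "x ^ p \<in> W3" if "x \<in> W2" for x
  proof -
    have "W2 \<subseteq> {x. x ^ p \<in> W3}"
      apply (subst U1, rule comp_least)
      using preimage_subfield[OF ch assms(5)] subfield_pow[OF assms(5)] W12W3'
      by (auto simp: p_def frob_pow_def power_mult[symmetric])
    thus ?thesis using that by auto
  qed
  have B: "compositum W3 (frob_pow K 2) = W2"
  proof (rule comp_eq[OF assms(4) assms(8) K2W2])
    define C where "C = compositum W3 (frob_pow K 2)"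
    have K2C: "(x ^ p) ^ p \<in> C" if "x \<in> K" for x
      using frob2_mem[OF that] comp_upper(2)[of "frob_pow K 2" W3] unfolding C_def p_def by auto
    have W3C: "W3 \<subseteq> C" unfolding C_def by (rule comp_upper)
    have sC: "is_subfield {x. x ^ p \<in> C}" unfolding C_def p_def by (rule preimage_subfield[OF ch comp_subfield])
    have "W1 \<subseteq> {x. x ^ p \<in> C}"
      apply (subst T1, rule comp_least[OF sC])
      using W2p W3C K2C
      by (auto simp: p_def frob_pow_def power_mult[symmetric])
    hence "frob_pow W1 1 \<subseteq> C" unfolding frob1 p_def by auto
    thus "W2 \<subseteq> C" 
      by (subst U1, intro comp_least) (auto simp: C_def comp_subfield comp_upper)
  qed
  have C: "compositum W3 (frob_pow K 1) = W1"
  proof (rule comp_eq[OF assms(3) W31 K1W1])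
    define C where "C = compositum W3 (frob_pow K 1)"
    have "frob_pow W1 1 \<subseteq> C" using assms(6) comp_upper(2)[of "frob_pow K 1" W3]
      unfolding frob1 C_def by auto
    hence "W2 \<subseteq> C" 
      by (subst U1, intro comp_least) (auto simp: C_def comp_subfield comp_upper)
    thus "W1 \<subseteq> C"
      by (subst T1, intro comp_least) (auto simp: C_def comp_subfield comp_upper)
  qed
  define V where "V = (\<lambda>k. [K, W1, W2, W3] ! min k 3)"
  have V0: "V 0 = K" and V1: "V 1 = W1" and V2: "V 2 = W2" and V3: "\<And>k. k \<ge> 3 \<Longrightarrow> V k = W3"
    unfolding V_def by (auto simp: numeral_3_eq_3 numeral_2_eq_2 min_def)
  have Vcases: "V k = K \<and> k = 0 \<or> V k = W1 \<and> k = 1 \<or> V k = W2 \<and> k = 2 \<or> V k = W3 \<and> k \<ge> 3" for k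
    using V0 V1 V2 V3 by (metis One_nat_def Suc_1 less_Suc_eq not_less numeral_3_eq_3 less_Suc0)
  have sub: "is_subfield (V i) \<and> V i \<subseteq> K" for i
    using Vcases[of i] assms W21 by auto
  have tow: "V j = compositum (V i) (frob_pow K j)" if "j \<le> i" for i j
  proof -
    consider "j = 0" | "j = 1" | "j = 2" | "j \<ge> 3" by linarith
    thus ?thesis
    proof cases
      case 1
      thus ?thesis using sub[of i] assms(2) by (simp add: V0 frob0 comp_eq comp_upper)
    next
      case 2
      hence "i \<ge> 1" using that by simp
      then consider "i = 1" | "i = 2" | "i \<ge> 3" by linarith
      thus ?thesis
      proof cases
        case 1 thus ?thesis using \<open>j = 1\<close> V1 assms(3) K1W1 by (metis comp_eq comp_upper(1) order_refl)
      next
        case 2 thus ?thesis using \<open>j = 1\<close> V1 V2 T1 by simp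
      next
        case 3 thus ?thesis using \<open>j = 1\<close> V1 V3 C by simp
      qed
    next
      case 3
      hence "i \<ge> 2" using that by simp
      then consider "i = 2" | "i \<ge> 3" by linarith
      thus ?thesis
      proof cases
        case 1 thus ?thesis using \<open>j = 2\<close> V2 T2 by simp
      next
        case 2 thus ?thesis using \<open>j = 2\<close> V2 V3 B by simp
      qed
    next
      case 4
      thus ?thesis using that V3 A[OF 4] assms(5) by (metis comp_eq comp_upper(1) order_refl le_trans)
    qed
  qed
  have tl1: "\<forall>m<2. \<not> (\<forall>N\<ge>m. [K, W1, W2] ! min N 2 = [K, W1, W2] ! min m 2)"
    using f1 unfolding tower_length_def by blast
  obtain N where N: "N \<ge> 1" "[K, W1, W2] ! min N 2 \<noteq> [K, W1, W2] ! min 1 2"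
    using tl1 by (metis one_less_numeral_iff semiring_norm(76))
  have "N = 1 \<or> min N 2 = 2" using N(1) by linarith
  hence W12: "W2 \<noteq> W1" using N(2) by (auto simp: numeral_2_eq_2)
  have tl2: "\<forall>m<2. \<not> (\<forall>N\<ge>m. [W1, W2, W3] ! min N 2 = [W1, W2, W3] ! min m 2)"
    using f2 unfolding tower_length_def by blast
  obtain N where N: "N \<ge> 1" "[W1, W2, W3] ! min N 2 \<noteq> [W1, W2, W3] ! min 1 2"
    using tl2 by (metis one_less_numeral_iff semiring_norm(76))
  have "N = 1 \<or> min N 2 = 2" using N(1) by linarith
  hence W23: "W3 \<noteq> W2" using N(2) by (auto simp: numeral_2_eq_2)
  have W2K: "W2 \<noteq> K" using W12 W21 assms(6) by auto
  have tl: "tower_length V 3"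
    unfolding tower_length_def
  proof (intro conjI allI impI)
    fix N :: nat assume "N \<ge> 3" thus "V N = V 3" using V3 by simp
  next
    fix m :: nat assume "m < 3"
    then consider "m = 0" | "m = 1" | "m = 2" by linarith
    thus "\<not> (\<forall>N\<ge>m. V N = V m)"
    proof cases
      case 1 thus ?thesis using V0 V2 W2K by (metis le0)
    next
      case 2 thus ?thesis using V1 V2 W12 by (metis one_le_numeral)
    next
      case 3 thus ?thesis using V2 V3[of 3] W23 by (metis le_refl numeral_le_iff semiring_norm(72) semiring_norm(69))
    qed
  qed
  have sd1: "\<forall>i<2. \<forall>j<2. same_dim ([K, W1, W2] ! Suc i) ([K, W1, W2] ! i) ([K, W1, W2] ! Suc j) ([K, W1, W2] ! j)"
    using f1 by blast
  have sd2: "\<forall>i<2. \<forall>j<2. same_dim ([W1, W2, W3] ! Suc i) ([W1, W2, W3] ! i) ([W1, W2, W3] ! Suc j) ([W1, W2, W3] ! j)"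
    using f2 by blast
  have d01: "same_dim W1 K W2 W1" using sd1[rule_format, of 0 1] by simp
  have d12: "same_dim W2 W1 W3 W2" using sd2[rule_format, of 0 1] by simp
  have d02: "same_dim W1 K W3 W2" using same_dim_trans[OF assms(4) d01 d12] .
  note ds = d01 d12 d02 same_dim_sym[OF d01] same_dim_sym[OF d12] same_dim_sym[OF d02]
     same_dim_refl[OF d01] same_dim_refl[OF d12] same_dim_refl[OF same_dim_sym[OF d12]]
  have sd: "\<forall>i<3. \<forall>j<3. same_dim ([K, W1, W2, W3] ! Suc i) ([K, W1, W2, W3] ! i) ([K, W1, W2, W3] ! Suc j) ([K, W1, W2, W3] ! j)"
  proof (intro allI impI)
    fix i j :: nat assume "i < 3" "j < 3"
    thus "same_dim ([K, W1, W2, W3] ! Suc i) ([K, W1, W2, W3] ! i) ([K, W1, W2, W3] ! Suc j) ([K, W1, W2, W3] ! j)"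
      using ds by (auto simp: numeral_3_eq_3 less_Suc_eq)
  qed
  show ?thesis
    unfolding foliation_def
    using assms(6,8) W21 sub tow tl sd unfolding power_tower_def V_def[symmetric]
    by (auto simp: less_Suc_eq numeral_3_eq_3)
qed

end
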